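(* Let $G$ be a noncyclic finite $p$-group and $N$ a nontrivial normal subgroup of $G$ such that $\eta(G) = \eta(G/N)$. Then: (i) for every normal subgroup $M$ of $G$, either $N \le M$ or $M \subseteq G^-$; (ii) if there exists a maximal cyclic subgroup $\langle x \rangle$ of $G$ that is normal in $G$, then $N \le \langle x \rangle$; in particular $N$ is cyclic.
   Context: A cyclic subgroup $C$ of a group $G$ is maximal cyclic if there is no cyclic subgroup $D$ of $G$ with $C < D$. $\eta(G)$ denotes the number of conjugacy classes of maximal cyclic subgroups of $G$. $G^- = \{ g \in G : \langle g \rangle \text{ is not maximal cyclic in } G\}$. *)

theory Defs
  imports "HOL-Algebra.Algebra"
begin

definition cyclic_subgroup :: "('a, 'b) monoid_scheme \<Rightarrow> 'a set \<Rightarrow> bool" where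
  "cyclic_subgroup G C \<longleftrightarrow> (\<exists>g \<in> carrier G. C = generate G {g})"

definition max_cyclic :: "('a, 'b) monoid_scheme \<Rightarrow> 'a set \<Rightarrow> bool" where
  "max_cyclic G C \<longleftrightarrow> cyclic_subgroup G C \<and> \<not> (\<exists>D. cyclic_subgroup G D \<and> C \<subset> D)"

definition conj_class :: "('a, 'b) monoid_scheme \<Rightarrow> 'a set \<Rightarrow> 'a set set" where
  "conj_class G C = {(\<lambda>h. g \<otimes>\<^bsub>G\<^esub> h \<otimes>\<^bsub>G\<^esub> inv\<^bsub>G\<^esub> g) ` C | g. g \<in> carrier G}"

definition eta :: "('a, 'b) monoid_scheme \<Rightarrow> nat" where
  "eta G = card {conj_class G C | C. max_cyclic G C}"

definition Gminus :: "('a, 'b) monoid_scheme \<Rightarrow> 'a set" where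
  "Gminus G = {g \<in> carrier G. \<not> max_cyclic G (generate G {g})}"

definition p_group :: "('a, 'b) monoid_scheme \<Rightarrow> nat \<Rightarrow> bool" where
  "p_group G p \<longleftrightarrow> group G \<and> finite (carrier G) \<and> Factorial_Ring.prime p \<and> (\<exists>n. order G = p ^ n)"

end

theory Submission
  imports Defs
begin

definition cnj :: "('a, 'b) monoid_scheme \<Rightarrow> 'a \<Rightarrow> 'a \<Rightarrow> 'a" where
  "cnj K a h = a \<otimes>\<^bsub>K\<^esub> h \<otimes>\<^bsub>K\<^esub> inv\<^bsub>K\<^esub> a"

lemma conj_class_cnj: "conj_class K C = {cnj K a ` C | a. a \<in> carrier K}"
  unfolding conj_class_def cnj_def by simp

lemma conj_class_img: "conj_class K C = (\<lambda>a. cnj K a ` C) ` carrier K"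
  unfolding conj_class_def cnj_def by blast

lemma (in group) inv_canc: "a \<in> carrier G \<Longrightarrow> h \<in> carrier G \<Longrightarrow> inv a \<otimes> (a \<otimes> h) = h"
  by (simp add: m_assoc[symmetric])

lemma (in group) cnj_hom: "a \<in> carrier G \<Longrightarrow> cnj G a \<in> hom G G"
  unfolding hom_def cnj_def by (auto simp: m_assoc inv_canc)

lemma (in group) cnj_comp: "a \<in> carrier G \<Longrightarrow> h \<in> carrier G \<Longrightarrow> cnj G (inv a) (cnj G a h) = h"
  unfolding cnj_def by (simp add: m_assoc inv_mult_group inv_canc)

lemma (in group) cnj_comp2: "a \<in> carrier G \<Longrightarrow> h \<in> carrier G \<Longrightarrow> cnj G a (cnj G (inv a) h) = h"
  using cnj_comp[of "inv a" h] by simp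

lemma (in group) cnj_one: "h \<in> carrier G \<Longrightarrow> cnj G \<one> h = h"
  unfolding cnj_def by simp

lemma (in group) cnj_closed: "a \<in> carrier G \<Longrightarrow> h \<in> carrier G \<Longrightarrow> cnj G a h \<in> carrier G"
  unfolding cnj_def by simp

lemma (in group) hom_generate:
  assumes "group H" "f \<in> hom G H" "x \<in> carrier G"
  shows "f ` generate G {x} = generate H {f x}"
proof -
  interpret group_hom G H f using assms by (simp add: group_hom_def group_hom_axioms_def is_group)
  show ?thesis using generate_img[of "{x}"] assms by simp
qed

lemma (in group) gen_sub: "x \<in> carrier G \<Longrightarrow> generate G {x} \<subseteq> carrier G"
  using generate_is_subgroup[of "{x}"] subgroup.subset by blast

lemma (in group) cyclic_sub: "cyclic_subgroup G C \<Longrightarrow> C \<subseteq> carrier G"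
  unfolding cyclic_subgroup_def using gen_sub by blast

lemma (in group) cnj_generate:
  "a \<in> carrier G \<Longrightarrow> x \<in> carrier G \<Longrightarrow> cnj G a ` generate G {x} = generate G {cnj G a x}"
  using hom_generate[OF is_group cnj_hom] by blast

lemma (in group) max_cyclic_cnj:
  assumes "max_cyclic G C" "a \<in> carrier G"
  shows "max_cyclic G (cnj G a ` C)"
proof -
  obtain g where g: "g \<in> carrier G" "C = generate G {g}"
    using assms(1) unfolding max_cyclic_def cyclic_subgroup_def by blast
  have cyc: "cyclic_subgroup G (cnj G a ` C)"
    unfolding cyclic_subgroup_def using g assms(2) cnj_generate cnj_closed by blast
  have "\<not> (cnj G a ` C \<subset> D)" if D: "cyclic_subgroup G D" for D
  proof
    assume ps: "cnj G a ` C \<subset> D"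
    obtain d where d: "d \<in> carrier G" "D = generate G {d}" using D unfolding cyclic_subgroup_def by blast
    have Dc: "D \<subseteq> carrier G" using D cyclic_sub by blast
    have Cc: "C \<subseteq> carrier G" using g gen_sub by blast
    have e1: "cnj G (inv a) ` (cnj G a ` C) = C"
      using Cc assms(2) cnj_comp by (force simp: image_image)
    have e2: "cnj G a ` (cnj G (inv a) ` D) = D"
      using Dc assms(2) cnj_comp2 by (force simp: image_image)
    have "C \<subseteq> cnj G (inv a) ` D" using ps e1 by blast
    moreover have "C \<noteq> cnj G (inv a) ` D" using ps e2 by blast
    moreover have "cyclic_subgroup G (cnj G (inv a) ` D)"
      unfolding cyclic_subgroup_def using d assms(2) cnj_generate cnj_closed by (metis inv_closed)
    ultimately show False using assms(1) unfolding max_cyclic_def by blast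
  qed
  then show ?thesis using cyc unfolding max_cyclic_def by blast
qed

lemma (in group) exists_max_cyclic:
  assumes "finite (carrier G)" "y \<in> carrier G"
  shows "\<exists>z \<in> carrier G. generate G {y} \<subseteq> generate G {z} \<and> max_cyclic G (generate G {z})"
proof -
  let ?S = "{D. cyclic_subgroup G D \<and> generate G {y} \<subseteq> D}"
  have "?S \<subseteq> Pow (carrier G)" using cyclic_sub by blast
  hence fin: "finite ?S" using assms(1) finite_subset by blast
  have ne: "?S \<noteq> {}" using assms(2) unfolding cyclic_subgroup_def by blast
  obtain m where m: "m \<in> ?S" "\<forall>b \<in> ?S. m \<subseteq> b \<longrightarrow> m = b"
    using finite_has_maximal[OF fin ne] by blast
  obtain z where z: "z \<in> carrier G" "m = generate G {z}" using m(1) unfolding cyclic_subgroup_def by blast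
  have "max_cyclic G m" unfolding max_cyclic_def using m by blast
  thus ?thesis using z m by blast
qed

lemma (in group) sub_cyclic:
  assumes x: "x \<in> carrier G" and N: "subgroup N G" and Nx: "N \<subseteq> generate G {x}"
  shows "cyclic_subgroup G N"
proof (cases "N = {\<one>}")
  case True
  then show ?thesis unfolding cyclic_subgroup_def using generate_one by blast
next
  case False
  interpret N: subgroup N G by (rule N)
  obtain w where w: "w \<in> N" "w \<noteq> \<one>" using False N.one_closed by blast
  obtain m :: int where m: "w = x [^] m" using w Nx generate_pow[OF x] by blast
  have m0: "m \<noteq> 0" using m w by auto
  have "x [^] \<bar>m\<bar> \<in> N"
  proof (cases "m \<ge> 0")
    case True then show ?thesis using m w by simp
  next
    case False
    then have "\<bar>m\<bar> = - m" by simp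
    then show ?thesis using m w int_pow_neg[OF x, of m] N.m_inv_closed by simp
  qed
  then have ex: "\<exists>k::nat. k > 0 \<and> x [^] int k \<in> N" using m0
    by (intro exI[of _ "nat \<bar>m\<bar>"]) simp
  define d where "d = (LEAST k::nat. k > 0 \<and> x [^] int k \<in> N)"
  have d: "d > 0" "x [^] int d \<in> N" using LeastI_ex[OF ex] unfolding d_def by auto
  have dmin: "\<And>k::nat. 0 < k \<Longrightarrow> k < d \<Longrightarrow> x [^] int k \<notin> N"
    unfolding d_def using not_less_Least by blast
  have xdc: "x [^] int d \<in> carrier G" using x by simp
  have "N = generate G {x [^] int d}"
  proof
    show "generate G {x [^] int d} \<subseteq> N" using d(2) generate_subgroup_incl[OF _ N] by blast
  next
    show "N \<subseteq> generate G {x [^] int d}"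
    proof
      fix v assume v: "v \<in> N"
      obtain k :: int where k: "v = x [^] k" using v Nx generate_pow[OF x] by blast
      define q where "q = k div int d"
      define r where "r = k mod int d"
      have kr: "k = int d * q + r" unfolding q_def r_def by simp
      have r0: "0 \<le> r" "r < int d" unfolding r_def using d(1) by auto
      have "x [^] k = (x [^] int d) [^] q \<otimes> x [^] r"
        using kr int_pow_mult[OF x] int_pow_pow[OF x] by simp
      hence "x [^] r = inv ((x [^] int d) [^] q) \<otimes> x [^] k"
        using x xdc by (simp add: inv_canc)
      moreover have "(x [^] int d) [^] q \<in> N"
        using d(2) xdc N.subgroup_axioms subgroup_int_pow_closed by blast
      ultimately have "x [^] r \<in> N" using v k N.m_inv_closed N.m_closed by simp
      hence "r = 0"
      proof (cases "r = 0")
        case False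
        have "int (nat r) = r" using r0 by simp
        moreover have "0 < nat r" "nat r < d" using r0 False by auto
        ultimately show ?thesis using dmin[of "nat r"] \<open>x [^] r \<in> N\<close> by simp
      qed
      hence "v = (x [^] int d) [^] q" using k kr int_pow_pow[OF x] by (simp add: mult.commute)
      thus "v \<in> generate G {x [^] int d}" using generate_pow[OF xdc] by blast
    qed
  qed
  then show ?thesis unfolding cyclic_subgroup_def using xdc by blast
qed

lemma (in group) self_in_class: "C \<subseteq> carrier G \<Longrightarrow> C \<in> conj_class G C"
proof -
  assume C: "C \<subseteq> carrier G"
  have "cnj G \<one> ` C = C" using C cnj_one by force
  thus ?thesis unfolding conj_class_cnj by force
qed

theorem corollary4p6:
  fixes G :: "('a, 'b) monoid_scheme" and N :: "'a set" and p :: nat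
  assumes "p_group G p"
    and "\<not> cyclic_subgroup G (carrier G)"
    and "N \<lhd> G"
    and "N \<noteq> {\<one>\<^bsub>G\<^esub>}"
    and "eta G = eta (G Mod N)"
  shows "(\<forall>M. M \<lhd> G \<longrightarrow> N \<subseteq> M \<or> M \<subseteq> Gminus G)
    \<and> (\<forall>x \<in> carrier G. max_cyclic G (generate G {x}) \<and> generate G {x} \<lhd> G
          \<longrightarrow> N \<subseteq> generate G {x} \<and> cyclic_subgroup G N)"
proof -
  have grp: "group G" and fin: "finite (carrier G)" using assms(1) unfolding p_group_def by auto
  interpret group G by (rule grp)
  interpret normal N G by (rule assms(3))
  define Q where "Q = G Mod N"
  define pi where "pi = (\<lambda>a. N #>\<^bsub>G\<^esub> a)"
  have grpQ: "group Q" unfolding Q_def by (rule factorgroup_is_group)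
  interpret Q: group Q by (rule grpQ)
  have hom: "pi \<in> hom G Q" unfolding Q_def pi_def by (rule r_coset_hom_Mod)
  interpret PH: group_hom G Q pi using hom grpQ
    by (simp add: group_hom_def group_hom_axioms_def is_group)
  have surj: "pi ` carrier G = carrier Q"
    unfolding Q_def pi_def FactGroup_def RCOSETS_def by auto
  have pigen: "\<And>x. x \<in> carrier G \<Longrightarrow> pi ` generate G {x} = generate Q {pi x}"
    using hom_generate[OF grpQ hom] by blast
  have picnj: "\<And>a h. a \<in> carrier G \<Longrightarrow> h \<in> carrier G \<Longrightarrow> pi (cnj G a h) = cnj Q (pi a) (pi h)"
    unfolding cnj_def by simp
  have e: "pi ` (cnj G a ` C) = cnj Q (pi a) ` (pi ` C)" if "a \<in> carrier G" "C \<subseteq> carrier G" for a C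
  proof -
    have "pi ` (cnj G a ` C) = (\<lambda>h. pi (cnj G a h)) ` C" by (simp add: image_image)
    also have "\<dots> = (\<lambda>h. cnj Q (pi a) (pi h)) ` C"
      using that picnj by (intro image_cong) auto
    also have "\<dots> = cnj Q (pi a) ` (pi ` C)" by (simp add: image_image)
    finally show ?thesis .
  qed
  define h where "h = (\<lambda>K. (\<lambda>D. pi ` D) ` K)"
  have hclass: "h (conj_class G C) = conj_class Q (pi ` C)" if C: "C \<subseteq> carrier G" for C
  proof -
    have "h (conj_class G C) = (\<lambda>a. pi ` (cnj G a ` C)) ` carrier G"
      unfolding h_def conj_class_img by (simp add: image_image)
    also have "\<dots> = (\<lambda>a. cnj Q (pi a) ` (pi ` C)) ` carrier G"
      using e C by (intro image_cong) auto
    also have "\<dots> = (\<lambda>b. cnj Q b ` (pi ` C)) ` (pi ` carrier G)"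
      by (simp add: image_image)
    finally show ?thesis unfolding conj_class_img surj .
  qed
  define XG where "XG = {conj_class G C | C. max_cyclic G C}"
  define YQ where "YQ = {conj_class Q D | D. max_cyclic Q D}"
  have cardXY: "card XG = card YQ" using assms(5) unfolding XG_def YQ_def Q_def eta_def .
  have "XG \<subseteq> Pow (Pow (carrier G))"
  proof
    fix K assume "K \<in> XG"
    then obtain C where C: "K = conj_class G C" "max_cyclic G C" unfolding XG_def by blast
    have "C \<subseteq> carrier G" using C(2) cyclic_sub unfolding max_cyclic_def by blast
    then show "K \<in> Pow (Pow (carrier G))" unfolding C(1) conj_class_cnj using cnj_closed by blast
  qed
  hence finX: "finite XG" using fin by (meson finite_Pow_iff finite_subset)
  define XP where "XP = {K \<in> XG. h K \<in> YQ}"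
  have XPX: "XP \<subseteq> XG" unfolding XP_def by blast
  have finX': "finite XP" using finX XPX finite_subset by blast
  have "YQ \<subseteq> h ` XP"
  proof
    fix K' assume "K' \<in> YQ"
    then obtain D where D: "K' = conj_class Q D" "max_cyclic Q D" unfolding YQ_def by blast
    then obtain q where q: "q \<in> carrier Q" "D = generate Q {q}"
      unfolding max_cyclic_def cyclic_subgroup_def by blast
    obtain y where y: "y \<in> carrier G" "q = pi y" using q(1) surj by blast
    obtain z where z: "z \<in> carrier G" "generate G {y} \<subseteq> generate G {z}" "max_cyclic G (generate G {z})"
      using exists_max_cyclic[OF fin y(1)] by blast
    have "D = pi ` generate G {y}" using q(2) y pigen by simp
    also have "\<dots> \<subseteq> pi ` generate G {z}" using z(2) by (rule image_mono)
    also have "\<dots> = generate Q {pi z}" using pigen z(1) by simp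
    finally have Dsub: "D \<subseteq> generate Q {pi z}" .
    have cyc: "cyclic_subgroup Q (generate Q {pi z})"
      unfolding cyclic_subgroup_def using PH.hom_closed[OF z(1)] by blast
    have "\<not> (\<exists>D'. cyclic_subgroup Q D' \<and> D \<subset> D')" using D(2) by (simp add: max_cyclic_def)
    hence "\<not> (D \<subset> generate Q {pi z})" using cyc by blast
    hence Dz: "D = generate Q {pi z}" using Dsub by blast
    have hK: "h (conj_class G (generate G {z})) = K'"
      unfolding hclass[OF gen_sub[OF z(1)]] pigen[OF z(1)] D(1) Dz ..
    have "conj_class G (generate G {z}) \<in> XG" unfolding XG_def using z(3) by blast
    hence "conj_class G (generate G {z}) \<in> XP" unfolding XP_def using hK \<open>K' \<in> YQ\<close> by simp
    thus "K' \<in> h ` XP" using hK by (metis image_eqI)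
  qed
  moreover have "h ` XP \<subseteq> YQ" unfolding XP_def by blast
  ultimately have hX': "h ` XP = YQ" by blast
  have c1: "card (h ` XP) \<le> card XP" using card_image_le[OF finX'] .
  have c2: "card XP \<le> card XG" using card_mono[OF finX XPX] .
  have inj: "inj_on h XP"
  proof -
    have "card (h ` XP) = card XP" using c1 c2 cardXY hX' by simp
    thus ?thesis using eq_card_imp_inj_on[OF finX'] by blast
  qed
  have XX: "XP = XG" using card_subset_eq[OF finX XPX] c1 c2 cardXY hX' by simp
  have maxQ: "max_cyclic Q (generate Q {pi x})" if x: "x \<in> carrier G" "max_cyclic G (generate G {x})" for x
  proof -
    have "conj_class G (generate G {x}) \<in> XP" using XX x(2) unfolding XG_def by blast
    hence "h (conj_class G (generate G {x})) \<in> YQ" unfolding XP_def by blast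
    hence "conj_class Q (generate Q {pi x}) \<in> YQ"
      using hclass[OF gen_sub[OF x(1)]] pigen[OF x(1)] by simp
    then obtain D where D: "conj_class Q (generate Q {pi x}) = conj_class Q D" "max_cyclic Q D"
      unfolding YQ_def by blast
    have "generate Q {pi x} \<in> conj_class Q D"
      using D(1) Q.self_in_class[OF Q.gen_sub] x(1) by force
    then obtain b where "b \<in> carrier Q" "generate Q {pi x} = cnj Q b ` D"
      unfolding conj_class_cnj by blast
    thus ?thesis using Q.max_cyclic_cnj[OF D(2)] by simp
  qed
  have injG: "\<exists>a \<in> carrier G. generate G {z} = cnj G a ` generate G {x}"
    if x: "x \<in> carrier G" "max_cyclic G (generate G {x})"
      and z: "z \<in> carrier G" "max_cyclic G (generate G {z})"
      and eq: "generate Q {pi x} = generate Q {pi z}" for x z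
  proof -
    have "h (conj_class G (generate G {x})) = h (conj_class G (generate G {z}))"
      using hclass[OF gen_sub[OF x(1)]] pigen[OF x(1)] hclass[OF gen_sub[OF z(1)]] pigen[OF z(1)] eq
      by simp
    moreover have "conj_class G (generate G {x}) \<in> XP" "conj_class G (generate G {z}) \<in> XP"
      using XX x(2) z(2) unfolding XG_def by blast+
    ultimately have "conj_class G (generate G {x}) = conj_class G (generate G {z})"
      using inj unfolding inj_on_def by blast
    hence "generate G {z} \<in> conj_class G (generate G {x})"
      using self_in_class[OF gen_sub[OF z(1)]] by simp
    thus ?thesis unfolding conj_class_cnj by blast
  qed
  have part1: "N \<subseteq> M \<or> M \<subseteq> Gminus G" if M: "M \<lhd> G" for M
  proof (rule ccontr)
    assume A: "\<not> (N \<subseteq> M \<or> M \<subseteq> Gminus G)"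
    interpret M: normal M G by (rule M)
    obtain n where n: "n \<in> N" "n \<notin> M" using A by blast
    obtain x where xM: "x \<in> M" and xG: "x \<notin> Gminus G" using A by blast
    have x: "x \<in> carrier G" using xM M.subset by blast
    have xmax: "max_cyclic G (generate G {x})" using xG x unfolding Gminus_def by simp
    have nc: "n \<in> carrier G" using n(1) subset by blast
    define y where "y = x \<otimes>\<^bsub>G\<^esub> n"
    have yc: "y \<in> carrier G" unfolding y_def using x nc by simp
    have "pi n = \<one>\<^bsub>Q\<^esub>" unfolding pi_def Q_def FactGroup_def
      using coset_join2[OF nc subgroup_axioms n(1)] by simp
    hence piy: "pi y = pi x" unfolding y_def using x nc by simp
    obtain z where z: "z \<in> carrier G" "generate G {y} \<subseteq> generate G {z}" "max_cyclic G (generate G {z})"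
      using exists_max_cyclic[OF fin yc] by blast
    have "generate Q {pi x} = pi ` generate G {y}" using piy pigen[OF yc] by simp
    also have "\<dots> \<subseteq> pi ` generate G {z}" using z(2) by (rule image_mono)
    also have "\<dots> = generate Q {pi z}" using pigen z(1) by simp
    finally have sub1: "generate Q {pi x} \<subseteq> generate Q {pi z}" .
    have cyc: "cyclic_subgroup Q (generate Q {pi z})"
      unfolding cyclic_subgroup_def using PH.hom_closed[OF z(1)] by blast
    have "\<not> (\<exists>D'. cyclic_subgroup Q D' \<and> generate Q {pi x} \<subset> D')"
      using maxQ[OF x xmax] by (simp add: max_cyclic_def)
    hence "\<not> (generate Q {pi x} \<subset> generate Q {pi z})" using cyc by blast
    hence "generate Q {pi x} = generate Q {pi z}" using sub1 by blast
    then obtain a where a: "a \<in> carrier G" "generate G {z} = cnj G a ` generate G {x}"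
      using injG[OF x xmax z(1) z(3)] by blast
    have gx: "generate G {x} \<subseteq> M" using xM generate_subgroup_incl[OF _ M.subgroup_axioms] by blast
    have "generate G {z} \<subseteq> M"
    proof
      fix w assume "w \<in> generate G {z}"
      then obtain u where u: "u \<in> generate G {x}" "w = cnj G a u" using a(2) by blast
      have "u \<in> M" using u(1) gx by blast
      thus "w \<in> M" using u(2) M.inv_op_closed2[OF a(1)] unfolding cnj_def by simp
    qed
    moreover have "y \<in> generate G {y}" by (rule generate.incl) simp
    ultimately have "y \<in> M" using z(2) by blast
    hence "inv\<^bsub>G\<^esub> x \<otimes>\<^bsub>G\<^esub> y \<in> M" using xM M.m_closed M.m_inv_closed by simp
    moreover have "inv\<^bsub>G\<^esub> x \<otimes>\<^bsub>G\<^esub> y = n" unfolding y_def using x nc by (simp add: inv_canc)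
    ultimately show False using n(2) by simp
  qed
  have part2: "N \<subseteq> generate G {x} \<and> cyclic_subgroup G N"
    if x: "x \<in> carrier G" "max_cyclic G (generate G {x})" "generate G {x} \<lhd> G" for x
  proof -
    have "x \<in> generate G {x}" by (rule generate.incl) simp
    moreover have "x \<notin> Gminus G" using x unfolding Gminus_def by simp
    ultimately have "\<not> generate G {x} \<subseteq> Gminus G" by blast
    hence sub: "N \<subseteq> generate G {x}" using part1[OF x(3)] by blast
    thus ?thesis using sub_cyclic[OF x(1) subgroup_axioms sub] by blast
  qed
  show ?thesis using part1 part2 by blast
qed

end
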